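(* There is a sequence of positive numbers $(a_k)_{k\ge1}$ with $\sum_{k=1}^\infty a_k<\infty$ such that $\mathbb E(U_k)\le a_k$ for every $n\ge 2k$ and every $p\ge 2/5$, where $U_k$ is the number of proper star $k$-separations of $\Gamma\in G(n,p)$.
   Context: $G(n,p)$ is the Erdős–Rényi random graph on vertex set $V$, $|V|=n$, each edge independently present with probability $p$. For a graph $\Delta$ with vertex set $W$, a separation is $S\subset W$ with $S\ne\varnothing$, $S\ne W$ and no edges between $S$ and $W\setminus S$. $\mathrm{st}(a)$ is $a$ with its neighbours. A star separation of $\Gamma$ is a pair $(a,S)$ with $a\in V$, $S\subset V\setminus\mathrm{st}(a)$, such that $S$ is a separation of the full subgraph $\Gamma\setminus\mathrm{st}(a)$; it is a star $k$-separation if $|S|=k$, and proper if $S$ is not a separation of $\Gamma$. *)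

theory Defs
  imports Complex_Main
begin

text \<open>Graphs on the vertex set V = {0..<n}, given by their edge set: a set of
  2-element subsets of V.\<close>

definition all_edges :: "nat \<Rightarrow> nat set set" where
  "all_edges n = {e. \<exists>u v. u < n \<and> v < n \<and> u \<noteq> v \<and> e = {u, v}}"

definition st :: "nat set set \<Rightarrow> nat \<Rightarrow> nat set" where
  "st E a = insert a {v. {a, v} \<in> E}"

definition is_separation :: "nat set set \<Rightarrow> nat set \<Rightarrow> nat set \<Rightarrow> bool" where
  "is_separation E W S \<longleftrightarrow> S \<subseteq> W \<and> S \<noteq> {} \<and> S \<noteq> W \<and>
     (\<forall>u\<in>S. \<forall>v\<in>W - S. {u, v} \<notin> E)"

definition star_separation :: "nat \<Rightarrow> nat set set \<Rightarrow> nat \<Rightarrow> nat set \<Rightarrow> bool" where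
  "star_separation n E a S \<longleftrightarrow> a < n \<and> S \<subseteq> {..<n} - st E a \<and>
     is_separation E ({..<n} - st E a) S"

definition proper_star_k_separation :: "nat \<Rightarrow> nat set set \<Rightarrow> nat \<Rightarrow> nat \<Rightarrow> nat set \<Rightarrow> bool" where
  "proper_star_k_separation n E k a S \<longleftrightarrow> star_separation n E a S \<and> card S = k \<and>
     \<not> is_separation E {..<n} S"

definition U :: "nat \<Rightarrow> nat \<Rightarrow> nat set set \<Rightarrow> nat" where
  "U n k E = card {(a, S). proper_star_k_separation n E k a S}"

definition gnp_expectation :: "nat \<Rightarrow> real \<Rightarrow> (nat set set \<Rightarrow> real) \<Rightarrow> real" where
  "gnp_expectation n p X = (\<Sum>E\<in>Pow (all_edges n).
     p ^ card E * (1 - p) ^ (card (all_edges n) - card E) * X E)"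

end

theory Submission
  imports Defs
begin

definition W :: "real \<Rightarrow> 'a set \<Rightarrow> 'a set \<Rightarrow> real" where
  "W p A E = p ^ card E * (1 - p) ^ card (A - E)"

lemma W_split:
  assumes "finite A" "finite B" "A \<inter> B = {}" "X \<subseteq> A" "Y \<subseteq> B"
  shows "W p (A \<union> B) (X \<union> Y) = W p A X * W p B Y"
proof -
  have fX: "finite X" "finite Y" using assms finite_subset by blast+
  have c1: "card (X \<union> Y) = card X + card Y"
    using fX assms by (intro card_Un_disjoint) auto
  have e: "A \<union> B - (X \<union> Y) = (A - X) \<union> (B - Y)" using assms by auto
  have c2: "card (A \<union> B - (X \<union> Y)) = card (A - X) + card (B - Y)"
    unfolding e using assms by (intro card_Un_disjoint) auto
  show ?thesis unfolding W_def c1 c2 by (simp add: power_add algebra_simps)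
qed

lemma sum_split:
  assumes "finite A" "finite B" "A \<inter> B = {}"
  shows "(\<Sum>E\<in>Pow (A \<union> B). W p (A \<union> B) E * f (E \<inter> A) * g (E \<inter> B)) =
         (\<Sum>X\<in>Pow A. W p A X * f X) * (\<Sum>Y\<in>Pow B. W p B Y * g Y)"
proof -
  let ?h = "\<lambda>(X, Y). X \<union> Y"
  have inj: "inj_on ?h (Pow A \<times> Pow B)"
  proof (rule inj_onI, clarsimp)
    fix X Y X' Y' assume "X \<subseteq> A" "Y \<subseteq> B" "X' \<subseteq> A" "Y' \<subseteq> B" "X \<union> Y = X' \<union> Y'"
    then show "X = X' \<and> Y = Y'" using assms(3) by blast
  qed
  have img: "Pow (A \<union> B) = ?h ` (Pow A \<times> Pow B)"
  proof
    show "Pow (A \<union> B) \<subseteq> ?h ` (Pow A \<times> Pow B)"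
    proof
      fix E assume "E \<in> Pow (A \<union> B)"
      then have "E = ?h (E \<inter> A, E \<inter> B)" "(E \<inter> A, E \<inter> B) \<in> Pow A \<times> Pow B" by auto
      then show "E \<in> ?h ` (Pow A \<times> Pow B)" by blast
    qed
  qed auto
  have "(\<Sum>E\<in>Pow (A \<union> B). W p (A \<union> B) E * f (E \<inter> A) * g (E \<inter> B)) =
        (\<Sum>z\<in>Pow A \<times> Pow B. W p (A \<union> B) (?h z) * f (?h z \<inter> A) * g (?h z \<inter> B))"
    unfolding img by (rule sum.reindex[OF inj, unfolded comp_def])
  also have "\<dots> = (\<Sum>z\<in>Pow A \<times> Pow B. (W p A (fst z) * f (fst z)) * (W p B (snd z) * g (snd z)))"
  proof (rule sum.cong[OF refl], clarsimp)
    fix X Y assume XY: "X \<subseteq> A" "Y \<subseteq> B"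
    have "(X \<union> Y) \<inter> A = X" "(X \<union> Y) \<inter> B = Y" using XY assms(3) by auto
    then show "W p (A \<union> B) (X \<union> Y) * f ((X \<union> Y) \<inter> A) * g ((X \<union> Y) \<inter> B) =
       W p A X * f X * (W p B Y * g Y)"
      using W_split[OF assms XY, of p] by simp
  qed
  also have "\<dots> = (\<Sum>X\<in>Pow A. W p A X * f X) * (\<Sum>Y\<in>Pow B. W p B Y * g Y)"
    by (simp add: sum_product sum.cartesian_product split_def)
  finally show ?thesis .
qed

lemma W_single: "(\<Sum>X\<in>Pow {x}. W p {x} X * f X) = (1 - p) * f {} + p * f {x}"
proof -
  have "Pow {x} = {{}, {x}}" by blast 
  then show ?thesis by (simp add: W_def)
qed

lemma W_total: "finite A \<Longrightarrow> (\<Sum>E\<in>Pow A. W p A E) = 1"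
proof (induction A rule: finite_induct)
  case empty
  then show ?case by (simp add: W_def)
next
  case (insert x A)
  have "(\<Sum>E\<in>Pow ({x} \<union> A). W p ({x} \<union> A) E * (\<lambda>_. 1) (E \<inter> {x}) * (\<lambda>_. 1) (E \<inter> A)) =
    (\<Sum>X\<in>Pow {x}. W p {x} X * (\<lambda>_. 1) X) * (\<Sum>Y\<in>Pow A. W p A Y * (\<lambda>_. 1) Y)"
    using insert by (intro sum_split) auto
  then show ?case using insert W_single[of p x "\<lambda>_. 1"] by simp
qed

lemma W_marginal:
  assumes "finite A" "B \<subseteq> A"
  shows "(\<Sum>E\<in>Pow A. W p A E * f (E \<inter> B)) = (\<Sum>X\<in>Pow B. W p B X * f X)"
proof -
  have fB: "finite B" using assms finite_subset by blast
  have A: "A = B \<union> (A - B)" using assms by auto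
  have "(\<Sum>E\<in>Pow (B \<union> (A - B)). W p (B \<union> (A - B)) E * f (E \<inter> B) * (\<lambda>_. 1) (E \<inter> (A - B))) =
    (\<Sum>X\<in>Pow B. W p B X * f X) * (\<Sum>Y\<in>Pow (A - B). W p (A - B) Y * (\<lambda>_. 1) Y)"
    using assms fB by (intro sum_split) auto
  then have "(\<Sum>E\<in>Pow A. W p A E * f (E \<inter> B) * (\<lambda>_. 1) (E \<inter> (A - B))) =
    (\<Sum>X\<in>Pow B. W p B X * f X) * (\<Sum>Y\<in>Pow (A - B). W p (A - B) Y * (\<lambda>_. 1) Y)"
    by (simp only: flip: A)
  then show ?thesis using W_total[of "A - B" p] assms by simp
qed

lemma W_prod:
  assumes "finite I" "finite A" "\<And>i. i \<in> I \<Longrightarrow> B i \<subseteq> A"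
    "\<And>i j. i \<in> I \<Longrightarrow> j \<in> I \<Longrightarrow> i \<noteq> j \<Longrightarrow> B i \<inter> B j = {}"
  shows "(\<Sum>E\<in>Pow A. W p A E * (\<Prod>i\<in>I. f i (E \<inter> B i))) =
         (\<Prod>i\<in>I. \<Sum>X\<in>Pow (B i). W p (B i) X * f i X)"
  using assms
proof (induction I arbitrary: A rule: finite_induct)
  case empty
  then show ?case using W_total[of A p] by simp
next
  case (insert i I)
  note fA = insert.prems(1)
  have sub: "\<And>j. j \<in> insert i I \<Longrightarrow> B j \<subseteq> A" by (rule insert.prems(2))
  have dis: "\<And>j. j \<in> I \<Longrightarrow> B i \<inter> B j = {}"
    using insert.prems(3) insert.hyps(2) by (metis insertCI)
  let ?C = "\<Union>j\<in>I. B j"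
  have CA: "?C \<subseteq> A" using sub by blast
  have fC: "finite ?C" using CA fA by (rule finite_subset)
  have fB: "finite (B i)" using sub fA finite_subset by blast
  have disj: "B i \<inter> ?C = {}" using dis by blast
  have BCA: "B i \<union> ?C \<subseteq> A" using sub CA by blast
  have "(\<Sum>E\<in>Pow A. W p A E * (\<Prod>j\<in>insert i I. f j (E \<inter> B j))) =
        (\<Sum>E\<in>Pow A. W p A E * (\<lambda>E. f i (E \<inter> B i) * (\<Prod>j\<in>I. f j (E \<inter> B j))) (E \<inter> (B i \<union> ?C)))"
  proof (rule sum.cong[OF refl])
    fix E assume "E \<in> Pow A"
    have 1: "E \<inter> (B i \<union> ?C) \<inter> B i = E \<inter> B i" by blast
    have 2: "(\<Prod>j\<in>I. f j (E \<inter> (B i \<union> ?C) \<inter> B j)) = (\<Prod>j\<in>I. f j (E \<inter> B j))"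
      apply (rule prod.cong[OF refl])
      subgoal for j by (rule arg_cong[of _ _ "f j"]) blast
      done
    show "W p A E * (\<Prod>j\<in>insert i I. f j (E \<inter> B j)) =
      W p A E * (\<lambda>E. f i (E \<inter> B i) * (\<Prod>j\<in>I. f j (E \<inter> B j))) (E \<inter> (B i \<union> ?C))"
      unfolding 1 2 prod.insert[OF insert.hyps] by simp
  qed
  also have "\<dots> = (\<Sum>X\<in>Pow (B i \<union> ?C). W p (B i \<union> ?C) X * (f i (X \<inter> B i) * (\<Prod>j\<in>I. f j (X \<inter> B j))))"
    using fA BCA by (rule W_marginal)
  also have "\<dots> = (\<Sum>X\<in>Pow (B i \<union> ?C). W p (B i \<union> ?C) X * f i (X \<inter> B i) * (\<lambda>Y. \<Prod>j\<in>I. f j (Y \<inter> B j)) (X \<inter> ?C))"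
  proof (rule sum.cong[OF refl])
    fix X assume "X \<in> Pow (B i \<union> ?C)"
    have 2: "(\<Prod>j\<in>I. f j (X \<inter> ?C \<inter> B j)) = (\<Prod>j\<in>I. f j (X \<inter> B j))"
      apply (rule prod.cong[OF refl])
      subgoal for j by (rule arg_cong[of _ _ "f j"]) blast
      done
    show "W p (B i \<union> ?C) X * (f i (X \<inter> B i) * (\<Prod>j\<in>I. f j (X \<inter> B j))) =
      W p (B i \<union> ?C) X * f i (X \<inter> B i) * (\<lambda>Y. \<Prod>j\<in>I. f j (Y \<inter> B j)) (X \<inter> ?C)"
      unfolding 2 by (simp only: mult.assoc)
  qed
  also have "\<dots> = (\<Sum>X\<in>Pow (B i). W p (B i) X * f i X) * (\<Sum>Y\<in>Pow ?C. W p ?C Y * (\<Prod>j\<in>I. f j (Y \<inter> B j)))"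
    using fB fC disj by (rule sum_split)
  also have "(\<Sum>Y\<in>Pow ?C. W p ?C Y * (\<Prod>j\<in>I. f j (Y \<inter> B j))) = (\<Prod>j\<in>I. \<Sum>X\<in>Pow (B j). W p (B j) X * f j X)"
  proof (rule insert.IH[OF fC])
    show "\<And>j. j \<in> I \<Longrightarrow> B j \<subseteq> ?C" by blast
    show "\<And>ia j. ia \<in> I \<Longrightarrow> j \<in> I \<Longrightarrow> ia \<noteq> j \<Longrightarrow> B ia \<inter> B j = {}"
      using insert.prems(3) by blast
  qed
  finally show ?case unfolding prod.insert[OF insert.hyps] .
qed

lemma W_split2:
  assumes "finite A" "B \<subseteq> A"
  shows "(\<Sum>E\<in>Pow A. W p A E * f (E \<inter> B) * g (E \<inter> (A - B))) =
    (\<Sum>X\<in>Pow B. W p B X * f X) * (\<Sum>Y\<in>Pow (A - B). W p (A - B) Y * g Y)"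
proof -
  have fB: "finite B" using assms finite_subset by blast
  have A: "A = B \<union> (A - B)" using assms by auto
  have "(\<Sum>E\<in>Pow (B \<union> (A - B)). W p (B \<union> (A - B)) E * f (E \<inter> B) * g (E \<inter> (A - B))) =
    (\<Sum>X\<in>Pow B. W p B X * f X) * (\<Sum>Y\<in>Pow (A - B). W p (A - B) Y * g Y)"
    using assms fB by (intro sum_split) auto
  then show ?thesis by (simp only: flip: A)
qed

lemma W_none: "finite B \<Longrightarrow> (\<Sum>X\<in>Pow B. W p B X * of_bool (X = {})) = (1 - p) ^ card B"
proof -
  assume "finite B"
  have "(\<Sum>X\<in>Pow B. W p B X * of_bool (X = {})) = (\<Sum>X\<in>Pow B. if X = {} then W p B X else 0)"
    by (rule sum.cong) auto
  also have "\<dots> = W p B {}" using \<open>finite B\<close> by (simp add: sum.delta')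
  finally show ?thesis by (simp add: W_def)
qed

lemma W_mem:
  assumes "finite D" "e \<in> D"
  shows "(\<Sum>X\<in>Pow D. W p D X * of_bool (e \<in> X)) = p"
proof -
  have "(\<Sum>X\<in>Pow D. W p D X * of_bool (e \<in> X)) = (\<Sum>X\<in>Pow D. W p D X * (\<lambda>Y. of_bool (e \<in> Y)) (X \<inter> {e}))"
    by (rule sum.cong) auto
  also have "\<dots> = (\<Sum>X\<in>Pow {e}. W p {e} X * of_bool (e \<in> X))"
    using assms by (intro W_marginal) auto
  also have "\<dots> = p" by (simp add: W_single)
  finally show ?thesis .
qed

lemma W_group:
  assumes "finite D" "e \<in> D"
  shows "(\<Sum>X\<in>Pow D. W p D X * (of_bool (e \<in> X) + of_bool (X = {}))) = p + (1 - p) ^ card D"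
  using W_mem[OF assms, of p] W_none[OF assms(1), of p]
  by (simp add: distrib_left sum.distrib)

definition F0 :: "nat \<Rightarrow> nat set \<Rightarrow> nat \<Rightarrow> nat set set" where
  "F0 a S w = (\<lambda>s. {a, s}) ` S \<union> {{a, w}} \<union> (\<lambda>s. {w, s}) ` S"

definition Dv :: "nat \<Rightarrow> nat set \<Rightarrow> nat \<Rightarrow> nat set set" where
  "Dv a S v = insert {v, a} ((\<lambda>s. {v, s}) ` S)"

definition ind :: "nat \<Rightarrow> nat \<Rightarrow> nat set \<Rightarrow> nat \<Rightarrow> nat set set \<Rightarrow> real" where
  "ind n a S w E = of_bool (E \<inter> F0 a S w = {}) *
     (\<Prod>v\<in>{..<n} - S - {a, w}. of_bool ({v, a} \<in> E \<inter> Dv a S v) + of_bool (E \<inter> Dv a S v = {}))"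

lemma inj_dbl: "x \<notin> S \<Longrightarrow> inj_on (\<lambda>s. {x, s}) S"
  by (rule inj_onI) (metis doubleton_eq_iff)

lemma card_F0:
  assumes "finite S" "a \<notin> S" "w \<notin> S" "w \<noteq> a"
  shows "card (F0 a S w) = 2 * card S + 1"
proof -
  have c1: "card ((\<lambda>s. {a, s}) ` S) = card S" by (rule card_image[OF inj_dbl[OF assms(2)]])
  have c2: "card ((\<lambda>s. {w, s}) ` S) = card S" by (rule card_image[OF inj_dbl[OF assms(3)]])
  have d1: "((\<lambda>s. {a, s}) ` S \<union> {{a, w}}) \<inter> (\<lambda>s. {w, s}) ` S = {}"
    using assms by (auto simp: doubleton_eq_iff)
  have d2: "(\<lambda>s. {a, s}) ` S \<inter> {{a, w}} = {}"
    using assms by (auto simp: doubleton_eq_iff)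
  have "card ((\<lambda>s. {a, s}) ` S \<union> {{a, w}}) = card S + 1"
    using card_Un_disjoint[OF _ _ d2] assms c1 by simp
  then show ?thesis unfolding F0_def
    using card_Un_disjoint[OF _ _ d1] assms c2 by simp
qed

lemma card_Dv:
  assumes "finite S" "a \<notin> S" "v \<notin> S" "v \<noteq> a"
  shows "card (Dv a S v) = card S + 1"
proof -
  have c: "card ((\<lambda>s. {v, s}) ` S) = card S" by (rule card_image[OF inj_dbl[OF assms(3)]])
  have "{v, a} \<notin> (\<lambda>s. {v, s}) ` S" using assms by (auto simp: doubleton_eq_iff)
  then show ?thesis unfolding Dv_def using c assms by simp
qed

lemma finite_all_edges: "finite (all_edges n)"
proof -
  have "all_edges n \<subseteq> Pow {..<n}" unfolding all_edges_def by auto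
  then show ?thesis by (rule finite_subset) simp
qed

lemma ind_expect:
  assumes a: "a < n" and S: "S \<subseteq> {..<n} - {a}" and w: "w \<in> {..<n} - S - {a}"
  shows "(\<Sum>E\<in>Pow (all_edges n). W p (all_edges n) E * ind n a S w E) =
    (1 - p) ^ (2 * card S + 1) * (p + (1 - p) ^ (card S + 1)) ^ card ({..<n} - S - {a, w})"
proof -
  let ?A = "all_edges n"
  let ?R = "{..<n} - S - {a, w}"
  let ?F = "F0 a S w"
  let ?h = "\<lambda>v X. of_bool ({v, a} \<in> X) + of_bool (X = {})"
  have fS: "finite S" using S finite_subset by blast
  have FA: "?F \<subseteq> ?A" using a S w unfolding F0_def all_edges_def by auto
  have DA: "\<And>v. v \<in> ?R \<Longrightarrow> Dv a S v \<subseteq> ?A - ?F"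
  proof -
    fix v assume v: "v \<in> ?R"
    have "Dv a S v \<subseteq> ?A" using v a S unfolding Dv_def all_edges_def by auto
    moreover have "Dv a S v \<inter> ?F = {}" using v S w unfolding Dv_def F0_def
      by (auto simp: doubleton_eq_iff)
    ultimately show "Dv a S v \<subseteq> ?A - ?F" by blast
  qed
  have Ddis: "\<And>u v. u \<in> ?R \<Longrightarrow> v \<in> ?R \<Longrightarrow> u \<noteq> v \<Longrightarrow> Dv a S u \<inter> Dv a S v = {}"
    using S unfolding Dv_def by (auto simp: doubleton_eq_iff)
  have "(\<Sum>E\<in>Pow ?A. W p ?A E * ind n a S w E) =
     (\<Sum>E\<in>Pow ?A. W p ?A E * (\<lambda>X. of_bool (X = {})) (E \<inter> ?F) *
        (\<lambda>Y. \<Prod>v\<in>?R. ?h v (Y \<inter> Dv a S v)) (E \<inter> (?A - ?F)))"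
  proof (rule sum.cong[OF refl])
    fix E assume E: "E \<in> Pow ?A"
    have eq: "(\<Prod>v\<in>?R. ?h v (E \<inter> (?A - ?F) \<inter> Dv a S v)) =
          (\<Prod>v\<in>?R. of_bool ({v, a} \<in> E \<inter> Dv a S v) + of_bool (E \<inter> Dv a S v = {}))"
    proof (rule prod.cong[OF refl])
      fix v assume "v \<in> ?R"
      then have "E \<inter> (?A - ?F) \<inter> Dv a S v = E \<inter> Dv a S v" using DA by blast
      then show "?h v (E \<inter> (?A - ?F) \<inter> Dv a S v) =
         of_bool ({v, a} \<in> E \<inter> Dv a S v) + of_bool (E \<inter> Dv a S v = {})" by simp
    qed
    show "W p ?A E * ind n a S w E = W p ?A E * (\<lambda>X. of_bool (X = {})) (E \<inter> ?F) *
        (\<lambda>Y. \<Prod>v\<in>?R. ?h v (Y \<inter> Dv a S v)) (E \<inter> (?A - ?F))"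
      unfolding ind_def by (simp only: eq mult.assoc)
  qed
  also have "\<dots> = (\<Sum>X\<in>Pow ?F. W p ?F X * of_bool (X = {})) *
     (\<Sum>Y\<in>Pow (?A - ?F). W p (?A - ?F) Y * (\<Prod>v\<in>?R. ?h v (Y \<inter> Dv a S v)))"
    using finite_all_edges FA by (rule W_split2)
  also have "(\<Sum>Y\<in>Pow (?A - ?F). W p (?A - ?F) Y * (\<Prod>v\<in>?R. ?h v (Y \<inter> Dv a S v))) =
     (\<Prod>v\<in>?R. \<Sum>X\<in>Pow (Dv a S v). W p (Dv a S v) X * ?h v X)"
    using finite_all_edges DA Ddis by (intro W_prod) auto
  also have "\<dots> = (\<Prod>v\<in>?R. p + (1 - p) ^ (card S + 1))"
  proof (rule prod.cong[OF refl])
    fix v assume v: "v \<in> ?R"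
    have fD: "finite (Dv a S v)" unfolding Dv_def using fS by simp
    have "{v, a} \<in> Dv a S v" unfolding Dv_def by simp
    show "(\<Sum>X\<in>Pow (Dv a S v). W p (Dv a S v) X * ?h v X) =
      p + (1 - p) ^ (card S + 1)"
    proof -
      have "a \<notin> S" "v \<notin> S" "v \<noteq> a" using v S by auto
      then have "card (Dv a S v) = card S + 1" using card_Dv[OF fS] by blast
      then show ?thesis using W_group[OF fD \<open>{v, a} \<in> Dv a S v\<close>, of p] by simp
    qed
  qed
  also have "(\<Sum>X\<in>Pow ?F. W p ?F X * of_bool (X = {})) = (1 - p) ^ (2 * card S + 1)"
  proof -
    have "a \<notin> S" "w \<notin> S" "w \<noteq> a" using S w by auto
    then have "card ?F = 2 * card S + 1" using card_F0[OF fS] by blast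
    then show ?thesis using W_none[of ?F p] finite_subset[OF FA finite_all_edges] by simp
  qed
  finally show ?thesis by simp
qed

lemma ind_nonneg: "ind n a S w E \<ge> 0"
  unfolding ind_def by (intro mult_nonneg_nonneg prod_nonneg) auto

lemma ind_cover:
  assumes P: "proper_star_k_separation n E k a S"
  shows "\<exists>w\<in>{..<n} - S - {a}. ind n a S w E = 1"
proof -
  let ?W = "{..<n} - st E a"
  have a: "a < n" and SW: "S \<subseteq> ?W" and sep: "is_separation E ?W S"
    using P unfolding proper_star_k_separation_def star_separation_def by auto
  have ne: "S \<noteq> ?W" and no: "\<And>u v. u \<in> S \<Longrightarrow> v \<in> ?W - S \<Longrightarrow> {u, v} \<notin> E"
    using sep unfolding is_separation_def by auto
  obtain w where w: "w \<in> ?W - S" using ne SW by blast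
  have stE: "\<And>v. v \<notin> st E a \<longleftrightarrow> v \<noteq> a \<and> {a, v} \<notin> E" unfolding st_def by auto
  have wa: "w \<noteq> a" "{a, w} \<notin> E" using w stE by auto
  have Sa: "\<And>s. s \<in> S \<Longrightarrow> s \<noteq> a \<and> {a, s} \<notin> E \<and> s < n" using SW stE by auto
  have F: "E \<inter> F0 a S w = {}"
  proof -
    have "\<And>s. s \<in> S \<Longrightarrow> {w, s} \<notin> E" using no[OF _ w] by (metis insert_commute)
    then show ?thesis unfolding F0_def using Sa wa by auto
  qed
  have one: "\<And>v. v \<in> {..<n} - S - {a, w} \<Longrightarrow>
     of_bool ({v, a} \<in> E \<inter> Dv a S v) + of_bool (E \<inter> Dv a S v = {}) = (1::real)"
  proof -
    fix v assume v: "v \<in> {..<n} - S - {a, w}"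
    have vD: "{v, a} \<in> Dv a S v" unfolding Dv_def by simp
    show "of_bool ({v, a} \<in> E \<inter> Dv a S v) + of_bool (E \<inter> Dv a S v = {}) = (1::real)"
    proof (cases "{a, v} \<in> E")
      case True
      then have "{v, a} \<in> E" by (metis insert_commute)
      then show ?thesis using vD by auto
    next
      case False
      then have "v \<in> ?W - S" using v stE by auto
      then have "\<And>s. s \<in> S \<Longrightarrow> {v, s} \<notin> E" using no by (metis insert_commute)
      moreover have "{v, a} \<notin> E" using False by (metis insert_commute)
      ultimately have "E \<inter> Dv a S v = {}" unfolding Dv_def by auto
      then show ?thesis by simp
    qed
  qed
  have "ind n a S w E = 1" unfolding ind_def using F one by (simp add: prod.neutral)
  moreover have "w \<in> {..<n} - S - {a}" using w wa by auto
  ultimately show ?thesis by blast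
qed

lemma U_bound:
  "real (U n k E) \<le> (\<Sum>a\<in>{..<n}. \<Sum>S\<in>{S. S \<subseteq> {..<n} - {a} \<and> card S = k}.
      \<Sum>w\<in>{..<n} - S - {a}. ind n a S w E)"
proof -
  let ?K = "\<lambda>a. {S. S \<subseteq> {..<n} - {a} \<and> card S = k}"
  let ?T = "{(a, S). proper_star_k_separation n E k a S}"
  let ?f = "\<lambda>(a, S). \<Sum>w\<in>{..<n} - S - {a}. ind n a S w E"
  have fin: "finite (Sigma {..<n} ?K)" by (intro finite_SigmaI) auto
  have sub: "?T \<subseteq> Sigma {..<n} ?K"
  proof
    fix x assume "x \<in> ?T"
    then obtain a S where x: "x = (a, S)" and P: "proper_star_k_separation n E k a S" by blast
    then have "a < n" "S \<subseteq> {..<n} - st E a" "card S = k"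
      unfolding proper_star_k_separation_def star_separation_def by auto
    moreover have "a \<in> st E a" unfolding st_def by simp
    ultimately show "x \<in> Sigma {..<n} ?K" using x by auto
  qed
  have "real (U n k E) = (\<Sum>x\<in>?T. 1)" unfolding U_def by simp
  also have "\<dots> \<le> (\<Sum>x\<in>?T. ?f x)"
  proof (rule sum_mono)
    fix x assume "x \<in> ?T"
    then obtain a S where x: "x = (a, S)" and P: "proper_star_k_separation n E k a S" by blast
    obtain w where w: "w \<in> {..<n} - S - {a}" "ind n a S w E = 1" using ind_cover[OF P] by blast
    have "ind n a S w E \<le> (\<Sum>w\<in>{..<n} - S - {a}. ind n a S w E)"
      by (rule member_le_sum[OF w(1)]) (auto simp: ind_nonneg)
    then show "1 \<le> ?f x" using x w by simp
  qed
  also have "\<dots> \<le> (\<Sum>x\<in>Sigma {..<n} ?K. ?f x)"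
    by (rule sum_mono2[OF fin sub]) (auto intro: sum_nonneg simp: ind_nonneg)
  also have "\<dots> = (\<Sum>a\<in>{..<n}. \<Sum>S\<in>?K a. ?f (a, S))"
    by (subst sum.Sigma) (auto simp: split_def)
  finally show ?thesis by simp
qed

lemma expect_bound:
  assumes p: "0 \<le> p" "p \<le> 1"
  shows "gnp_expectation n p (\<lambda>E. real (U n k E)) \<le>
    real n * real ((n - 1) choose k) * real (n - 1 - k) *
    ((1 - p) ^ (2 * k + 1) * (p + (1 - p) ^ (k + 1)) ^ (n - 1 - k - 1))"
proof -
  let ?A = "all_edges n"
  let ?K = "\<lambda>a. {S. S \<subseteq> {..<n} - {a} \<and> card S = k}"
  let ?c = "(1 - p) ^ (2 * k + 1) * (p + (1 - p) ^ (k + 1)) ^ (n - 1 - k - 1)"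
  have Wnn: "\<And>E. W p ?A E \<ge> 0" unfolding W_def using p by simp
  have "gnp_expectation n p (\<lambda>E. real (U n k E)) = (\<Sum>E\<in>Pow ?A. W p ?A E * real (U n k E))"
    unfolding gnp_expectation_def W_def
  proof (rule sum.cong[OF refl])
    fix E assume "E \<in> Pow ?A"
    then have "card ?A - card E = card (?A - E)"
      using finite_all_edges by (simp add: card_Diff_subset finite_subset)
    then show "p ^ card E * (1 - p) ^ (card ?A - card E) * real (U n k E) =
      p ^ card E * (1 - p) ^ card (?A - E) * real (U n k E)" by simp
  qed
  also have "\<dots> \<le> (\<Sum>E\<in>Pow ?A. W p ?A E * (\<Sum>a\<in>{..<n}. \<Sum>S\<in>?K a.
      \<Sum>w\<in>{..<n} - S - {a}. ind n a S w E))"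
    by (intro sum_mono mult_left_mono U_bound Wnn)
  also have "\<dots> = (\<Sum>a\<in>{..<n}. \<Sum>S\<in>?K a. \<Sum>w\<in>{..<n} - S - {a}.
       \<Sum>E\<in>Pow ?A. W p ?A E * ind n a S w E)"
    by (simp add: sum_distrib_left sum.swap[of _ "Pow ?A"])
  also have "\<dots> = (\<Sum>a\<in>{..<n}. \<Sum>S\<in>?K a. \<Sum>w\<in>{..<n} - S - {a}. ?c)"
  proof (intro sum.cong refl)
    fix a S w assume a: "a \<in> {..<n}" and S: "S \<in> ?K a" and w: "w \<in> {..<n} - S - {a}"
    have fS: "finite S" using S finite_subset by blast
    have "{..<n} - S - {a, w} = ({..<n} - {a} - S) - {w}" by auto
    moreover have "card ({..<n} - {a} - S) = n - 1 - k"
      using S a by (simp add: card_Diff_subset fS)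
    ultimately have "card ({..<n} - S - {a, w}) = n - 1 - k - 1"
      using w by (simp add: card_Diff_singleton)
    then show "(\<Sum>E\<in>Pow ?A. W p ?A E * ind n a S w E) = ?c"
      using ind_expect[of a n S w p] a S w by simp
  qed
  also have "\<dots> = real n * real ((n - 1) choose k) * real (n - 1 - k) * ?c"
  proof -
    have "\<And>a S. a \<in> {..<n} \<Longrightarrow> S \<in> ?K a \<Longrightarrow> card ({..<n} - S - {a}) = n - 1 - k"
    proof -
      fix a S assume a: "a \<in> {..<n}" and S: "S \<in> ?K a"
      have fS: "finite S" using S finite_subset by blast
      have "{..<n} - S - {a} = {..<n} - {a} - S" by auto
      then show "card ({..<n} - S - {a}) = n - 1 - k"
        using S a by (simp add: card_Diff_subset fS)
    qed
    moreover have "\<And>a. a \<in> {..<n} \<Longrightarrow> card (?K a) = (n - 1) choose k"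
      using n_subsets[of "{..<n} - {_}" k] by simp
    ultimately show ?thesis by simp
  qed
  finally show ?thesis .
qed

lemma gen_nat:
  fixes N k m c0 c1 c2 :: nat
  assumes "Suc N * c0 = Suc k * c1" "Suc (Suc N) * c1 = Suc (Suc k) * c2" "m \<le> Suc (Suc N)"
  shows "Suc N * c0 * m \<le> Suc k * Suc (Suc k) * c2"
proof -
  have "Suc N * c0 * m = Suc k * c1 * m" using assms(1) by simp
  also have "\<dots> \<le> Suc k * c1 * Suc (Suc N)" using assms(3) by (intro mult_left_mono) auto
  also have "\<dots> = Suc k * (Suc (Suc N) * c1)" by (simp only: ac_simps)
  also have "\<dots> = Suc k * Suc (Suc k) * c2" using assms(2) by (simp only: ac_simps)
  finally show ?thesis .
qed

lemma binom_bound_nat: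
  fixes m k :: nat
  shows "(m + k + 1) * ((m + k) choose k) * m \<le> (k + 1) * (k + 2) * ((m + k + 2) choose (k + 2))"
proof -
  have "Suc (m + k) * ((m + k) choose k) * m \<le> Suc k * Suc (Suc k) * (Suc (Suc (m + k)) choose Suc (Suc k))"
    by (rule gen_nat[OF Suc_times_binomial[of k "m + k", symmetric] Suc_times_binomial[of "Suc k" "Suc (m + k)", symmetric]]) (rule le_SucI, rule le_SucI, rule le_add1)
  moreover have "m + k + 1 = Suc (m + k)" "m + k + 2 = Suc (Suc (m + k))" "k + 2 = Suc (Suc k)" "k + 1 = Suc k"
    by simp_all
  ultimately show ?thesis by (simp only:)
qed

lemma binom_term_le:
  fixes y r :: real
  assumes "0 \<le> y" "0 \<le> r" "y + r = 1" "j \<le> M"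
  shows "real (M choose j) * y ^ j * r ^ (M - j) \<le> 1"
proof -
  have "real (M choose j) * y ^ j * r ^ (M - j) \<le> (\<Sum>i\<le>M. real (M choose i) * y ^ i * r ^ (M - i))"
    by (rule member_le_sum) (use assms in auto)
  also have "\<dots> = (y + r) ^ M" by (simp add: binomial_ring)
  finally show ?thesis using assms by simp
qed

lemma q_le: "k \<ge> 1 \<Longrightarrow> (3/5::real) ^ k \<le> 3/5"
  using power_decreasing[of 1 k "3/5::real"] by simp

lemma le_inv_helper: "(d::real) > 0 \<Longrightarrow> c * d \<le> 1 \<Longrightarrow> c \<le> 1 / d"
  by (simp add: pos_le_divide_eq)

lemma pow_pred: "m \<noteq> 0 \<Longrightarrow> (r::real) \<noteq> 0 \<Longrightarrow> r ^ (m - 1) = r ^ m / r"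
  by (cases m) auto

lemma pow_split: "k \<ge> 1 \<Longrightarrow> (x::real) ^ (2 * k + 1) = x ^ (k - 1) * x ^ (k + 2)"
proof -
  assume "k \<ge> 1"
  then have "2 * k + 1 = (k - 1) + (k + 2)" by simp
  then show ?thesis by (metis power_add)
qed

lemma final_chain:
  fixes N K C x1 x2 Rm R q Dinv :: real
  assumes "N \<le> K * C" "0 \<le> K" "0 \<le> x1" "x1 \<le> q" "0 \<le> x2" "0 \<le> Rm" "0 \<le> C"
    "C * x2 * Rm \<le> Dinv" "R \<ge> 2/5"
  shows "N * (x1 * x2 * (Rm / R)) \<le> K * q * Dinv * (5/2)"
proof -
  have R: "R > 0" using assms by simp
  have P: "0 \<le> x1 * x2 * (Rm / R)" using assms R by simp
  have T: "0 \<le> C * x2 * Rm" using assms by simp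
  have "N * (x1 * x2 * (Rm / R)) \<le> K * C * (x1 * x2 * (Rm / R))" using assms(1) P by (rule mult_right_mono)
  also have "\<dots> = (K * x1 * (C * x2 * Rm)) * (1 / R)" by simp
  also have "\<dots> \<le> (K * q * Dinv) * (5 / 2)"
  proof (rule mult_mono)
    show "K * x1 * (C * x2 * Rm) \<le> K * q * Dinv"
      using assms T by (intro mult_mono mult_left_mono) auto
    show "1 / R \<le> 5 / 2" using assms R by (simp add: divide_le_eq)
    show "0 \<le> K * q * Dinv" using assms T by (intro mult_nonneg_nonneg) linarith+
    show "0 \<le> 1 / R" using R by simp
  qed
  finally show ?thesis .
qed

definition aa :: "nat \<Rightarrow> real" where
  "aa k = (real k + 1) * (real k + 2) * (3/5) ^ (k - 1) * (1 / (1 - (3/5) ^ k) ^ (k + 2)) * (5/2)"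

lemma aa_pos: "k \<ge> 1 \<Longrightarrow> aa k > 0"
proof -
  assume k: "k \<ge> 1"
  have "(3/5::real) ^ k \<le> 3/5" using k by (rule q_le)
  then have "1 - (3/5::real) ^ k > 0" by simp
  then show ?thesis unfolding aa_def by simp
qed

lemma main_ineq:
  fixes x :: real and m k :: nat
  assumes k: "k \<ge> 1" and x: "0 \<le> x" "x \<le> 3/5"
  shows "real (m + k + 1) * real ((m + k) choose k) * real m *
      (x ^ (2 * k + 1) * (1 - x + x ^ (k + 1)) ^ (m - 1)) \<le> aa k"
proof (cases "m = 0")
  case True
  then show ?thesis using aa_pos[OF k] by simp
next
  case False
  let ?r = "1 - x + x ^ (k + 1)"
  let ?y = "x - x ^ (k + 1)"
  let ?C = "real ((m + k + 2) choose (k + 2))"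
  have xk: "x ^ k \<le> (3/5) ^ k" using x by (simp add: power_mono)
  have q1: "(3/5::real) ^ k \<le> 3/5" using k by (rule q_le)
  have xk1: "x ^ k \<le> 1" using xk q1 by linarith
  have xpos: "x ^ (k + 1) \<ge> 0" using x by simp
  have r: "?r \<ge> 2/5" using x xpos by linarith
  have y: "?y = x * (1 - x ^ k)" by (simp add: algebra_simps)
  have ynn: "?y \<ge> 0" unfolding y using x xk1 by simp
  have D: "1 - (3/5::real) ^ k > 0" using q1 by simp
  have Dx: "1 - x ^ k \<ge> 1 - (3/5) ^ k" using xk by simp
  have bt: "?C * ?y ^ (k + 2) * ?r ^ m \<le> 1"
    using binom_term_le[of ?y ?r "k + 2" "m + k + 2"] ynn r by simp
  have bt2: "?C * x ^ (k + 2) * ?r ^ m * (1 - (3/5) ^ k) ^ (k + 2) \<le> 1"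
  proof -
    have "?C * x ^ (k + 2) * ?r ^ m * (1 - (3/5) ^ k) ^ (k + 2) \<le> ?C * x ^ (k + 2) * ?r ^ m * (1 - x ^ k) ^ (k + 2)"
      using D Dx r x by (intro mult_left_mono power_mono) auto
    also have "\<dots> = ?C * ?y ^ (k + 2) * ?r ^ m" unfolding y by (simp add: power_mult_distrib)
    finally show ?thesis using bt by simp
  qed
  have bt3: "?C * x ^ (k + 2) * ?r ^ m \<le> 1 / (1 - (3/5) ^ k) ^ (k + 2)"
    by (rule le_inv_helper[OF zero_less_power[OF D] bt2])
  have rm: "?r ^ (m - 1) = ?r ^ m / ?r" by (rule pow_pred[OF False]) (use r in linarith)
  have nat: "real (m + k + 1) * real ((m + k) choose k) * real m \<le> (real k + 1) * (real k + 2) * ?C"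
  proof -
    have "real ((m + k + 1) * ((m + k) choose k) * m) \<le> real ((k + 1) * (k + 2) * ((m + k + 2) choose (k + 2)))"
      using binom_bound_nat[of m k] by (simp only: of_nat_le_iff)
    then show ?thesis by (simp only: of_nat_mult of_nat_add of_nat_1 of_nat_numeral)
  qed
  have x2: "x ^ (2 * k + 1) = x ^ (k - 1) * x ^ (k + 2)" using k by (intro pow_split)
  have xk3: "x ^ (k - 1) \<le> (3/5) ^ (k - 1)" using x by (simp add: power_mono)
  have Cn: "?C \<ge> 0" by simp
  have xn: "x ^ (k - 1) \<ge> 0" "x ^ (k + 2) \<ge> 0" "?r ^ m \<ge> 0" using x r by auto
  show ?thesis unfolding aa_def x2 rm
    by (rule final_chain[OF nat _ xn(1) xk3 xn(2,3) Cn bt3 r]) simp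
qed

lemma tail_small: "k \<ge> 8 \<Longrightarrow> (real k + 3) * (3/5) ^ (k + 1) \<le> 1/2"
proof (induction k rule: dec_induct)
  case base
  then show ?case by (simp add: power_divide)
next
  case (step k)
  have "(real (Suc k) + 3) * (3/5) ^ (Suc k + 1) = ((3/5) * (real k + 4)) * (3/5::real) ^ (k + 1)"
    by simp
  also have "\<dots> \<le> (real k + 3) * (3/5) ^ (k + 1)"
    by (intro mult_right_mono) auto
  finally show ?case using step.IH by linarith
qed

lemma denom_big: "k \<ge> 8 \<Longrightarrow> (1 - (3/5::real) ^ (k + 1)) ^ (k + 3) \<ge> 1/2"
proof -
  assume k: "k \<ge> 8"
  have q: "(3/5::real) ^ (k + 1) \<le> 1" by (rule power_le_one) auto
  have "1 + real (k + 3) * (- ((3/5::real) ^ (k + 1))) \<le> (1 + (- ((3/5) ^ (k + 1)))) ^ (k + 3)"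
    using q by (intro Bernoulli_inequality) simp
  moreover have "real (k + 3) = real k + 3" by simp
  ultimately show ?thesis using tail_small[OF k] by simp
qed

definition gg :: "nat \<Rightarrow> real" where "gg k = 5 * ((real k + 2) * (real k + 3)) * (3/5) ^ k"

lemma gg_summable: "summable gg"
proof (rule summable_ratio_test[of "9/10" 2])
  fix n :: nat assume n: "2 \<le> n"
  have "gg (Suc n) = (5 * (real n + 3) * (3/5) ^ n) * ((3/5) * (real n + 4))"
    unfolding gg_def by (simp add: field_simps)
  also have "\<dots> \<le> (5 * (real n + 3) * (3/5) ^ n) * ((9/10) * (real n + 2))"
    using n by (intro mult_left_mono) auto
  also have "\<dots> = 9/10 * gg n" unfolding gg_def by (simp add: field_simps)
  finally show "norm (gg (Suc n)) \<le> 9/10 * norm (gg n)" unfolding gg_def by simp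
qed simp

lemma aa_summable: "summable (\<lambda>k. aa (Suc k))"
proof (rule summable_comparison_test'[OF gg_summable])
  fix k :: nat assume k: "8 \<le> k"
  have D: "(1 - (3/5::real) ^ (k + 1)) ^ (k + 3) \<ge> 1/2" using denom_big[OF k] .
  have Dinv: "1 / (1 - (3/5::real) ^ (Suc k)) ^ (Suc k + 2) \<le> 2"
  proof -
    have e1: "Suc k = k + 1" "Suc k + 2 = k + 3" by simp_all
    have e: "(1 - (3/5::real) ^ (Suc k)) ^ (Suc k + 2) = (1 - (3/5::real) ^ (k + 1)) ^ (k + 3)" by (simp only: e1(2)) (simp only: e1(1))
    show ?thesis unfolding e using D by (simp add: divide_le_eq)
  qed
  have pos: "aa (Suc k) > 0" by (rule aa_pos) simp
  have "aa (Suc k) = ((real k + 2) * (real k + 3) * (3/5) ^ k * (5/2)) * (1 / (1 - (3/5) ^ (Suc k)) ^ (Suc k + 2))"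
    unfolding aa_def by (simp add: algebra_simps)
  also have "\<dots> \<le> ((real k + 2) * (real k + 3) * (3/5) ^ k * (5/2)) * 2"
    by (rule mult_left_mono[OF Dinv]) simp
  also have "\<dots> = gg k" unfolding gg_def by simp
  finally show "norm (aa (Suc k)) \<le> gg k" using pos by simp
qed

theorem proposition3p4:
  shows "\<exists>a :: nat \<Rightarrow> real. (\<forall>k\<ge>1. a k > 0) \<and> summable (\<lambda>k. a (Suc k)) \<and>
    (\<forall>k n p. k \<ge> 1 \<longrightarrow> n \<ge> 2 * k \<longrightarrow> 2/5 \<le> p \<longrightarrow> p \<le> 1 \<longrightarrow>
       gnp_expectation n p (\<lambda>E. real (U n k E)) \<le> a k)"
proof (intro exI[of _ aa] conjI allI impI)
  show "\<And>k. 1 \<le> k \<Longrightarrow> 0 < aa k" by (rule aa_pos)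
  show "summable (\<lambda>k. aa (Suc k))" by (rule aa_summable)
  fix k n :: nat and p :: real
  assume k: "1 \<le> k" and n: "2 * k \<le> n" and p: "2/5 \<le> p" "p \<le> 1"
  let ?m = "n - 1 - k"
  have e1: "?m + k + 1 = n" "?m + k = n - 1" "n - 1 + 1 = n" using k n by auto
  have e2: "1 - (1 - p) + (1 - p) ^ (k + 1) = p + (1 - p) ^ (k + 1)" by simp
  have "gnp_expectation n p (\<lambda>E. real (U n k E)) \<le>
    real n * real ((n - 1) choose k) * real ?m *
    ((1 - p) ^ (2 * k + 1) * (p + (1 - p) ^ (k + 1)) ^ (?m - 1))"
    using p by (intro expect_bound) auto
  also have "\<dots> \<le> aa k"
    using main_ineq[OF k, of "1 - p" ?m] p unfolding e1 e2 by simp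
  finally show "gnp_expectation n p (\<lambda>E. real (U n k E)) \<le> aa k" .
qed

end
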